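(* There exists $(\alpha_n(0))_{n\geq0}\in\mathbb{D}^\infty$ such that, for the solution $\alpha_n(t)$ of the Schur flow $\alpha_n'(t)=(1-|\alpha_n(t)|^2)(\alpha_{n+1}(t)-\alpha_{n-1}(t))$, $n\geq0$, $\alpha_{-1}\equiv-1$, with these initial conditions, $\alpha_0(t)$ does not have a limit as $t\to\infty$.
   Context: $\mathbb{D}=\{z\in\mathbb{C}:|z|<1\}$. For initial data in $\mathbb{D}^\infty$ the Schur flow has a unique global solution with values in $\mathbb{D}$; it is given by $\alpha_n(t)=\alpha_n(\mu_t)$, where $\mu$ is the probability measure on the unit circle with Verblunsky coefficients $\alpha_n(\mu)=\alpha_n(0)$ and $d\mu_t(\theta)=e^{2t\cos\theta}d\mu(\theta)/\int e^{2t\cos\theta}d\mu(\theta)$. *)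

theory Defs
  imports "HOL-Analysis.Analysis"
begin

definition schur_prev :: "(nat \<Rightarrow> real \<Rightarrow> complex) \<Rightarrow> nat \<Rightarrow> real \<Rightarrow> complex" where
  "schur_prev \<alpha> n t = (if n = 0 then -1 else \<alpha> (n - 1) t)"

definition schur_flow_solution :: "(nat \<Rightarrow> complex) \<Rightarrow> (nat \<Rightarrow> real \<Rightarrow> complex) \<Rightarrow> bool" where
  "schur_flow_solution a0 \<alpha> \<longleftrightarrow>
     (\<forall>n. \<alpha> n 0 = a0 n) \<and>
     (\<forall>n t. norm (\<alpha> n t) < 1) \<and>
     (\<forall>n t. ((\<alpha> n) has_vector_derivative
               (complex_of_real (1 - (norm (\<alpha> n t))\<^sup>2) * (\<alpha> (Suc n) t - schur_prev \<alpha> n t))) (at t))"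

end

theory Submission
  imports Defs
begin


definition lam :: "nat \<Rightarrow> real" where "lam j = 1 - 1 / 2^j"
definition xs :: "nat \<Rightarrow> real" where "xs j = lam j / 2"
definition zeta :: "nat \<Rightarrow> complex" where
  "zeta j = Complex (xs j) ((-1)^j * sqrt (1 - (xs j)^2))"
definition wt :: "nat \<Rightarrow> real" where "wt j = exp (- (4^(j+2)))"
definition Wc :: "nat \<Rightarrow> complex \<Rightarrow> complex" where
  "Wc j z = of_real (wt j) * exp (z * of_real (lam j))"

lemma lam_bounds: "0 \<le> lam j" "lam j < 1"
  by (auto simp: lam_def)

lemma xs_bounds: "0 \<le> xs j" "xs j < 1/2"
  using lam_bounds[of j] by (auto simp: xs_def)

lemma norm_zeta: "norm (zeta j) = 1"
proof -
  have "(xs j)^2 \<le> 1" using xs_bounds[of j] by (intro power_le_one) auto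
  moreover have "((-1::real)^j)^2 = 1" by (induct j) auto
  ultimately show ?thesis
    by (simp add: zeta_def norm_complex_def power_mult_distrib)
qed

lemma zeta_cnj_mult: "cnj (zeta j) * zeta j = 1"
  using norm_zeta[of j] by (metis complex_norm_square mult.commute of_real_1 power_one)

lemma zeta_plus_cnj: "zeta j + cnj (zeta j) = of_real (lam j)"
  by (simp add: zeta_def complex_eq_iff xs_def)

lemma wt_pos: "0 < wt j" by (simp add: wt_def)

lemma wt_le: "wt j \<le> exp (-1) ^ j"
proof -
  have "real j \<le> 4^(j+2)"
  proof -
    have "j < 2^j" by (rule less_exp)
    also have "(2::nat)^j \<le> 4^j" by (rule power_mono) auto
    also have "(4::nat)^j \<le> 4^(j+2)" by (rule power_increasing) auto
    finally have "j \<le> 4^(j+2)" by (rule less_imp_le)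
    then have "real j \<le> real (4^(j+2))" by (simp only: of_nat_le_iff)
    then show ?thesis by (simp only: of_nat_power of_nat_numeral)
  qed
  then show ?thesis by (simp add: wt_def exp_of_nat_mult[symmetric])
qed

lemma summable_wt: "summable wt"
  by (rule summable_comparison_test[OF _ summable_geometric[of "exp (-1)"]])
     (use wt_le wt_pos in \<open>auto intro!: exI[of _ 0] simp: less_imp_le\<close>)

lemma norm_Wc: "norm (Wc j z) \<le> wt j * exp (norm z)"
proof -
  have "Re z * lam j \<le> abs (Re z) * lam j" by (rule mult_right_mono) (auto simp: lam_bounds)
  also have "\<dots> \<le> norm z * 1" by (rule mult_mono) (auto simp: abs_Re_le_cmod lam_bounds less_imp_le)
  finally have "Re (z * of_real (lam j)) \<le> norm z" by simp
  then show ?thesis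
    using wt_pos[of j] by (simp add: Wc_def norm_mult)
qed

lemma norm_zpow: "norm (zeta j ^ a * cnj (zeta j) ^ b) = 1"
  by (simp add: norm_mult norm_power norm_zeta)

definition Gc :: "nat \<Rightarrow> nat \<Rightarrow> complex \<Rightarrow> complex" where
  "Gc a b z = (\<Sum>j. Wc j z * (zeta j ^ a * cnj (zeta j) ^ b))"

lemma summable_Gterm: "summable (\<lambda>j. Wc j z * c j)" if "\<And>j. norm (c j) \<le> 1" for c
proof (rule summable_norm_cancel)
  have s: "summable (\<lambda>n. wt n * exp (norm z))" by (rule summable_mult2[OF summable_wt])
  have "\<exists>N. \<forall>n\<ge>N. norm (norm (Wc n z * c n)) \<le> wt n * exp (norm z)"
  proof (intro exI allI impI)
    fix n
    have "norm (Wc n z * c n) \<le> norm (Wc n z) * 1"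
      unfolding norm_mult by (rule mult_left_mono) (use that in auto)
    then show "norm (norm (Wc n z * c n)) \<le> wt n * exp (norm z)" using norm_Wc[of n z] by simp
  qed
  from summable_comparison_test[OF this s] show "summable (\<lambda>n. norm (Wc n z * c n))" .
qed

lemma Gc_deriv: "(Gc a b has_field_derivative (Gc (Suc a) b z + Gc a (Suc b) z)) (at z)"
proof -
  define S where "S = ball (0::complex) (norm z + 1)"
  let ?f = "\<lambda>j w. Wc j w * (zeta j ^ a * cnj (zeta j) ^ b)"
  let ?f' = "\<lambda>j w. Wc j w * of_real (lam j) * (zeta j ^ a * cnj (zeta j) ^ b)"
  have d: "(?f j has_field_derivative ?f' j w) (at w)" for j w
    unfolding Wc_def by (auto intro!: derivative_eq_intros)
  have unif: "uniformly_convergent_on S (\<lambda>n w. \<Sum>i<n. ?f' i w)"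
  proof (rule Weierstrass_m_test'[of _ _ "\<lambda>j. wt j * exp (norm z + 1)"])
    fix j w assume "w \<in> S"
    then have "norm w \<le> norm z + 1" by (simp add: S_def)
    then have "wt j * exp (norm w) \<le> wt j * exp (norm z + 1)"
      using wt_pos[of j] by (intro mult_left_mono) auto
    then have "norm (Wc j w) \<le> wt j * exp (norm z + 1)"
      using norm_Wc[of j w] by linarith
    moreover have "norm (of_real (lam j) * (zeta j ^ a * cnj (zeta j) ^ b)) \<le> 1"
      using lam_bounds[of j] by (simp add: norm_mult norm_power norm_zeta)
    then have "norm (Wc j w) * norm (of_real (lam j) * (zeta j ^ a * cnj (zeta j) ^ b)) \<le> norm (Wc j w) * 1"
      by (intro mult_left_mono) auto
    ultimately show "norm (?f' j w) \<le> wt j * exp (norm z + 1)"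
      by (simp only: mult.assoc norm_mult)
  qed (rule summable_mult2[OF summable_wt])
  have "summable (\<lambda>n. ?f n 0)" by (rule summable_Gterm) (simp add: norm_zpow)
  have "((\<lambda>w. \<Sum>n. ?f n w) has_field_derivative (\<Sum>n. ?f' n z)) (at z)"
  proof -
    have c: "convex S" by (simp add: S_def)
    have i: "0 \<in> S" "z \<in> interior S" by (auto simp: S_def add_nonneg_pos)
    have dd: "\<And>n x. x \<in> S \<Longrightarrow> (?f n has_field_derivative ?f' n x) (at x within S)"
      using d by (auto intro: has_field_derivative_at_within)
    show ?thesis
      using has_field_derivative_series'(2)[OF c dd unif i(1) \<open>summable (\<lambda>n. ?f n 0)\<close> i(2)] by simp
  qed
  moreover have "(\<Sum>n. ?f' n z) = Gc (Suc a) b z + Gc a (Suc b) z"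
  proof -
    have e: "?f' n z = Wc n z * (zeta n ^ Suc a * cnj (zeta n) ^ b) + Wc n z * (zeta n ^ a * cnj (zeta n) ^ Suc b)" for n
      by (simp add: zeta_plus_cnj[symmetric] algebra_simps)
    show ?thesis unfolding e Gc_def
      by (rule suminf_add[symmetric]; rule summable_Gterm; simp add: norm_mult norm_power norm_zeta)
  qed
  ultimately show ?thesis unfolding Gc_def[abs_def] by simp
qed



lemma mvt_vec:
  fixes f :: "real \<Rightarrow> complex"
  assumes "a \<le> b" "\<And>x. x \<in> {a..b} \<Longrightarrow> (f has_vector_derivative f' x) (at x)"
    "\<And>x. x \<in> {a..b} \<Longrightarrow> norm (f' x) \<le> B"
  shows "norm (f b - f a) \<le> B * (b - a)"
proof -
  have "norm (f b - f a) \<le> B * norm (b - a)"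
  proof (rule differentiable_bound[of "{a..b}" f "\<lambda>x h. h *\<^sub>R f' x" B b a])
    show "convex {a..b}" by simp
    show "(f has_derivative (\<lambda>h. h *\<^sub>R f' x)) (at x within {a..b})" if "x \<in> {a..b}" for x
      using assms(2)[OF that] by (auto simp: has_vector_derivative_def intro: has_derivative_at_withinI)
    show "onorm (\<lambda>h. h *\<^sub>R f' x) \<le> B" if "x \<in> {a..b}" for x
    proof (rule onorm_le)
      fix h :: real
      have "norm (h *\<^sub>R f' x) = norm h * norm (f' x)" by simp
      also have "\<dots> \<le> norm h * B" by (rule mult_left_mono) (use assms(3)[OF that] in auto)
      finally show "norm (h *\<^sub>R f' x) \<le> B * norm h" by (simp add: mult.commute)
    qed
  qed (use assms(1) in auto)
  then show ?thesis using assms(1) by simp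
qed

lemma lip_bound:
  fixes x y x1 y1 px py :: complex
  assumes "norm x < 1" "norm y < 1" "norm y1 \<le> 1" "norm py \<le> 1"
  shows "norm (of_real (1 - (norm x)^2) * (x1 - px) - of_real (1 - (norm y)^2) * (y1 - py))
         \<le> norm (x1 - y1) + norm (px - py) + 4 * norm (x - y)"
proof -
  have dec: "of_real (1 - (norm x)^2) * (x1 - px) - of_real (1 - (norm y)^2) * (y1 - py) =
     of_real (1 - (norm x)^2) * ((x1 - y1) - (px - py)) + of_real ((norm y)^2 - (norm x)^2) * (y1 - py)"
    by (simp add: algebra_simps)
  have c1: "\<bar>1 - (norm x)^2\<bar> \<le> 1"
  proof -
    have "(norm x)^2 \<le> 1" using assms(1) by (simp add: power_le_one)
    then show ?thesis by simp
  qed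
  have n1: "norm (of_real (1 - (norm x)^2) * ((x1 - y1) - (px - py))) \<le> norm (x1 - y1) + norm (px - py)"
  proof -
    have "norm (of_real (1 - (norm x)^2) * ((x1 - y1) - (px - py))) =
          \<bar>1 - (norm x)^2\<bar> * norm ((x1 - y1) - (px - py))" by (simp only: norm_mult norm_of_real)
    also have "\<dots> \<le> 1 * norm ((x1 - y1) - (px - py))" by (rule mult_right_mono[OF c1]) simp
    also have "\<dots> \<le> norm (x1 - y1) + norm (px - py)" by (simp add: norm_triangle_ineq4)
    finally show ?thesis .
  qed
  have c2: "\<bar>(norm y)^2 - (norm x)^2\<bar> \<le> 2 * norm (x - y)"
  proof -
    have e: "(norm y)^2 - (norm x)^2 = (norm y - norm x) * (norm y + norm x)"
      by (simp add: power2_eq_square algebra_simps)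
    have "\<bar>(norm y)^2 - (norm x)^2\<bar> = \<bar>norm y - norm x\<bar> * (norm y + norm x)"
      unfolding e abs_mult using abs_of_nonneg[of "norm y + norm x"] by simp
    also have "\<dots> \<le> norm (x - y) * 2"
    proof (rule mult_mono)
      show "\<bar>norm y - norm x\<bar> \<le> norm (x - y)" by (metis norm_minus_commute norm_triangle_ineq3)
      show "norm y + norm x \<le> 2" using assms(1,2) by simp
    qed auto
    finally show ?thesis by simp
  qed
  have c3: "norm (y1 - py) \<le> 2" using assms(3,4) norm_triangle_ineq4[of y1 py] by simp
  have n2: "norm (of_real ((norm y)^2 - (norm x)^2) * (y1 - py)) \<le> 4 * norm (x - y)"
  proof -
    have "norm (of_real ((norm y)^2 - (norm x)^2) * (y1 - py)) = \<bar>(norm y)^2 - (norm x)^2\<bar> * norm (y1 - py)"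
      by (simp only: norm_mult norm_of_real)
    also have "\<dots> \<le> (2 * norm (x - y)) * 2" by (rule mult_mono[OF c2 c3]) auto
    finally show ?thesis by simp
  qed
  show ?thesis unfolding dec using n1 n2 norm_triangle_ineq[of "of_real (1 - (norm x)^2) * ((x1 - y1) - (px - py))"
    "of_real ((norm y)^2 - (norm x)^2) * (y1 - py)"] by linarith
qed

lemma sf_step:
  assumes A: "schur_flow_solution a0 \<alpha>" and B: "schur_flow_solution b0 \<beta>"
    and agree: "\<And>n. \<alpha> n s0 = \<beta> n s0"
  shows "\<And>n s. s \<in> {s0..s0 + 1/12} \<Longrightarrow> \<alpha> n s = \<beta> n s"
proof -
  have nA: "\<And>n t. norm (\<alpha> n t) < 1" and dA: "\<And>n t. ((\<alpha> n) has_vector_derivative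
     (complex_of_real (1 - (norm (\<alpha> n t))\<^sup>2) * (\<alpha> (Suc n) t - schur_prev \<alpha> n t))) (at t)"
    using A unfolding schur_flow_solution_def by auto
  have nB: "\<And>n t. norm (\<beta> n t) < 1" and dB: "\<And>n t. ((\<beta> n) has_vector_derivative
     (complex_of_real (1 - (norm (\<beta> n t))\<^sup>2) * (\<beta> (Suc n) t - schur_prev \<beta> n t))) (at t)"
    using B unfolding schur_flow_solution_def by auto
  define E where "E = {norm (\<alpha> n s - \<beta> n s) | n s. s \<in> {s0..s0 + 1/12}}"
  have Ene: "E \<noteq> {}" by (auto simp: E_def intro!: exI[of _ s0])
  have Ebd: "\<And>x. x \<in> E \<Longrightarrow> x \<le> 2"
  proof -
    fix x assume "x \<in> E"
    then obtain n s where x: "x = norm (\<alpha> n s - \<beta> n s)" by (auto simp: E_def)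
    have "norm (\<alpha> n s - \<beta> n s) \<le> norm (\<alpha> n s) + norm (\<beta> n s)" by (rule norm_triangle_ineq4)
    then show "x \<le> 2" using nA[of n s] nB[of n s] x by linarith
  qed
  then have bdd: "bdd_above E" by (auto simp: bdd_above_def)
  define D where "D = Sup E"
  have le_D: "norm (\<alpha> n s - \<beta> n s) \<le> D" if "s \<in> {s0..s0 + 1/12}" for n s
    unfolding D_def by (rule cSup_upper[OF _ bdd]) (use that in \<open>auto simp: E_def\<close>)
  have prev_le: "norm (schur_prev \<alpha> n s - schur_prev \<beta> n s) \<le> D" if "s \<in> {s0..s0 + 1/12}" for n s
  proof (cases n)
    case 0
    have "0 \<le> D" using le_D[OF that, of 0] by (meson norm_ge_zero order_trans)
    then show ?thesis using 0 by (simp add: schur_prev_def)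
  next
    case (Suc m) then show ?thesis using le_D[OF that, of m] by (simp add: schur_prev_def)
  qed
  have pn: "norm (schur_prev \<beta> n s) \<le> 1" for n s
    using nB[of "n - 1" s] by (simp add: schur_prev_def less_imp_le)
  have half: "x \<le> D / 2" if "x \<in> E" for x
  proof -
    from that obtain n s where x: "x = norm (\<alpha> n s - \<beta> n s)" and s: "s \<in> {s0..s0 + 1/12}"
      by (auto simp: E_def)
    have "norm ((\<lambda>t. \<alpha> n t - \<beta> n t) s - (\<lambda>t. \<alpha> n t - \<beta> n t) s0) \<le> (6 * D) * (s - s0)"
    proof (rule mvt_vec)
      show "s0 \<le> s" using s by simp
      fix y assume y: "y \<in> {s0..s}"
      then have y': "y \<in> {s0..s0 + 1/12}" using s by auto
      show "((\<lambda>t. \<alpha> n t - \<beta> n t) has_vector_derivative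
          (complex_of_real (1 - (norm (\<alpha> n y))\<^sup>2) * (\<alpha> (Suc n) y - schur_prev \<alpha> n y) -
           complex_of_real (1 - (norm (\<beta> n y))\<^sup>2) * (\<beta> (Suc n) y - schur_prev \<beta> n y))) (at y)"
        by (intro derivative_intros dA dB)
      have "norm (complex_of_real (1 - (norm (\<alpha> n y))\<^sup>2) * (\<alpha> (Suc n) y - schur_prev \<alpha> n y) -
           complex_of_real (1 - (norm (\<beta> n y))\<^sup>2) * (\<beta> (Suc n) y - schur_prev \<beta> n y))
         \<le> norm (\<alpha> (Suc n) y - \<beta> (Suc n) y) + norm (schur_prev \<alpha> n y - schur_prev \<beta> n y)
           + 4 * norm (\<alpha> n y - \<beta> n y)"
        by (rule lip_bound) (use nA nB pn in \<open>auto simp: less_imp_le\<close>)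
      also have "\<dots> \<le> D + D + 4 * D"
        using le_D[OF y', of "Suc n"] le_D[OF y', of n] prev_le[OF y', of n] by linarith
      finally show "norm (complex_of_real (1 - (norm (\<alpha> n y))\<^sup>2) * (\<alpha> (Suc n) y - schur_prev \<alpha> n y) -
           complex_of_real (1 - (norm (\<beta> n y))\<^sup>2) * (\<beta> (Suc n) y - schur_prev \<beta> n y)) \<le> 6 * D"
        by simp
    qed
    then have "x \<le> (6 * D) * (s - s0)" using x agree[of n] by simp
    also have "\<dots> \<le> (6 * D) * (1/12)"
    proof (rule mult_left_mono)
      show "s - s0 \<le> 1/12" using s by simp
      show "0 \<le> 6 * D" using le_D[OF s, of n] by (meson norm_ge_zero order_trans mult_nonneg_nonneg zero_le_numeral)
    qed
    finally show ?thesis by simp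
  qed
  have "D \<le> D / 2" unfolding D_def by (rule cSup_least[OF Ene]) (use half D_def in auto)
  then have "D \<le> 0" by simp
  then show "\<And>n s. s \<in> {s0..s0 + 1/12} \<Longrightarrow> \<alpha> n s = \<beta> n s"
    using le_D by (meson norm_le_zero_iff order_trans right_minus_eq)
qed

lemma sf_unique:
  assumes A: "schur_flow_solution a0 \<alpha>" and B: "schur_flow_solution a0 \<beta>" and t: "0 \<le> t"
  shows "\<alpha> n t = \<beta> n t"
proof -
  have K: "\<forall>n. \<forall>s\<in>{0..real K / 12}. \<alpha> n s = \<beta> n s" for K
  proof (induction K)
    case 0
    then show ?case using A B by (auto simp: schur_flow_solution_def)
  next
    case (Suc K)
    have ag: "\<And>n. \<alpha> n (real K / 12) = \<beta> n (real K / 12)" using Suc by auto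
    show ?case
    proof (intro allI ballI)
      fix n s assume s: "s \<in> {0..real (Suc K) / 12}"
      show "\<alpha> n s = \<beta> n s"
      proof (cases "s \<le> real K / 12")
        case True then show ?thesis using Suc s by auto
      next
        case False
        then have "s \<in> {real K / 12 .. real K / 12 + 1/12}" using s by (auto simp: field_simps)
        then show ?thesis using sf_step[OF A B ag] by blast
      qed
    qed
  qed
  have "t \<le> real (nat \<lceil>12 * t\<rceil>) / 12" using t by (simp add: field_simps)
  then show ?thesis using K[of "nat \<lceil>12 * t\<rceil>"] t by auto
qed



definition W :: "nat \<Rightarrow> real \<Rightarrow> real" where "W j t = wt j * exp (t * lam j)"
definition G :: "nat \<Rightarrow> nat \<Rightarrow> real \<Rightarrow> complex" where "G a b t = Gc a b (of_real t)"

lemma Wc_real: "Wc j (of_real t) = of_real (W j t)"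
proof -
  have "exp (complex_of_real t * complex_of_real (lam j)) = complex_of_real (exp (t * lam j))"
    by (metis exp_of_real of_real_mult)
  then show ?thesis by (simp add: Wc_def W_def)
qed

lemma W_pos: "0 < W j t" by (simp add: W_def wt_pos)

lemma W_le: "W j t \<le> wt j * exp \<bar>t\<bar>"
proof -
  have "t * lam j \<le> \<bar>t\<bar>"
  proof -
    have "t * lam j \<le> \<bar>t\<bar> * lam j" by (rule mult_right_mono) (auto simp: lam_bounds)
    also have "\<dots> \<le> \<bar>t\<bar> * 1" by (rule mult_left_mono) (auto simp: lam_bounds less_imp_le)
    finally show ?thesis by simp
  qed
  then show ?thesis using wt_pos[of j] by (simp add: W_def)
qed

lemma summable_W: "summable (\<lambda>j. W j t)"
  by (rule summable_comparison_test[OF _ summable_mult2[OF summable_wt, of "exp \<bar>t\<bar>"]])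
     (use W_le W_pos in \<open>auto intro!: exI[of _ 0] simp: less_imp_le\<close>)

lemma G_sums: "(\<lambda>j. of_real (W j t) * (zeta j ^ a * cnj (zeta j) ^ b)) sums G a b t"
proof -
  have "summable (\<lambda>j. Wc j (of_real t) * (zeta j ^ a * cnj (zeta j) ^ b))"
    by (rule summable_Gterm) (simp add: norm_mult norm_power norm_zeta)
  then show ?thesis by (simp add: G_def Gc_def Wc_real summable_sums)
qed

lemma G_deriv: "((\<lambda>s. G a b s) has_vector_derivative (G (Suc a) b t + G a (Suc b) t)) (at t)"
  unfolding G_def by (rule has_vector_derivative_real_field) (rule Gc_deriv)

lemma uv_shift: "cnj (zeta j) * zeta j = 1 \<Longrightarrow> zeta j ^ (p + c) * cnj (zeta j) ^ (q + c) = zeta j ^ p * cnj (zeta j) ^ q"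
proof (induction c)
  case (Suc c)
  have "zeta j ^ (p + Suc c) * cnj (zeta j) ^ (q + Suc c) =
        (zeta j ^ (p + c) * cnj (zeta j) ^ (q + c)) * (cnj (zeta j) * zeta j)"
    by (simp add: algebra_simps)
  then show ?case using Suc by simp
qed simp

lemma G_termeq:
  assumes "\<And>j. zeta j ^ a * cnj (zeta j) ^ b = zeta j ^ c * cnj (zeta j) ^ d"
  shows "G a b t = G c d t"
  using G_sums[of t a b] G_sums[of t c d] assms sums_unique2 by (simp add: assms)

lemma G_Suc: "G (Suc a) (Suc b) t = G a b t"
  by (rule G_termeq) (use uv_shift[OF zeta_cnj_mult, of _ a 1 b] in simp)

lemma G_rev: "a \<le> n \<Longrightarrow> b \<le> n \<Longrightarrow> G (n - a) (n - b) t = G b a t"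
proof (rule G_termeq)
  fix j assume "a \<le> n" "b \<le> n"
  have 1: "zeta j ^ b * cnj (zeta j) ^ a = zeta j ^ (b + (n - a)) * cnj (zeta j) ^ n"
    using uv_shift[OF zeta_cnj_mult, of j b "n - a" a] \<open>a \<le> n\<close> by simp
  have 2: "zeta j ^ (n - a) * cnj (zeta j) ^ (n - b) = zeta j ^ (b + (n - a)) * cnj (zeta j) ^ n"
    using uv_shift[OF zeta_cnj_mult, of j "n - a" b "n - b"] \<open>b \<le> n\<close> by (simp add: add.commute)
  show "zeta j ^ (n - a) * cnj (zeta j) ^ (n - b) = zeta j ^ b * cnj (zeta j) ^ a"
    using 1 2 by simp
qed

lemma G_cnj: "cnj (G a b t) = G b a t"
proof -
  have "(\<lambda>j. cnj (of_real (W j t) * (zeta j ^ a * cnj (zeta j) ^ b))) sums cnj (G a b t)"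
    using G_sums[of t a b] by (simp only: sums_cnj)
  moreover have "(\<lambda>j. cnj (of_real (W j t) * (zeta j ^ a * cnj (zeta j) ^ b))) =
                 (\<lambda>j. of_real (W j t) * (zeta j ^ b * cnj (zeta j) ^ a))"
    by (simp add: mult.commute)
  ultimately show ?thesis using G_sums[of t b a] sums_unique2 by metis
qed

definition ipe :: "nat \<Rightarrow> real \<Rightarrow> (nat \<Rightarrow> complex) \<Rightarrow> nat \<Rightarrow> complex" where
  "ipe N t p k = (\<Sum>a\<le>N. p a * G a k t)"
definition ip :: "nat \<Rightarrow> real \<Rightarrow> (nat \<Rightarrow> complex) \<Rightarrow> (nat \<Rightarrow> complex) \<Rightarrow> complex" where
  "ip N t p q = (\<Sum>b\<le>N. cnj (q b) * ipe N t p b)"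
definition peval :: "nat \<Rightarrow> (nat \<Rightarrow> complex) \<Rightarrow> complex \<Rightarrow> complex" where
  "peval N p z = (\<Sum>a\<le>N. p a * z ^ a)"

lemma ip_sums: "(\<lambda>j. of_real (W j t) * (peval N p (zeta j) * cnj (peval N q (zeta j)))) sums ip N t p q"
proof -
  have "(\<lambda>j. \<Sum>b\<le>N. cnj (q b) * (\<Sum>a\<le>N. p a * (of_real (W j t) * (zeta j ^ a * cnj (zeta j) ^ b))))
        sums (\<Sum>b\<le>N. cnj (q b) * (\<Sum>a\<le>N. p a * G a b t))"
    by (intro sums_sum sums_mult G_sums)
  moreover have "(\<lambda>j. \<Sum>b\<le>N. cnj (q b) * (\<Sum>a\<le>N. p a * (of_real (W j t) * (zeta j ^ a * cnj (zeta j) ^ b))))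
     = (\<lambda>j. of_real (W j t) * (peval N p (zeta j) * cnj (peval N q (zeta j))))"
    by (simp add: peval_def sum_distrib_left sum_distrib_right cnj_sum mult_ac)
  ultimately show ?thesis by (simp add: ip_def ipe_def)
qed

lemma zeta_inj: "inj zeta"
proof (rule injI)
  fix i j assume "zeta i = zeta j"
  then have "xs i = xs j" by (metis complex.sel(1) zeta_def)
  then have "(1/2::real)^i = (1/2)^j" by (simp add: xs_def lam_def power_one_over)
  then show "i = j" by (simp add: power_inject_exp')
qed

lemma ip_pos:
  assumes "\<exists>a\<le>N. p a \<noteq> 0"
  shows "ip N t p p = of_real (Re (ip N t p p))" "0 < Re (ip N t p p)"
proof -
  define f where "f j = W j t * (norm (peval N p (zeta j)))^2" for j
  have eq: "of_real (W j t) * (peval N p (zeta j) * cnj (peval N p (zeta j))) = of_real (f j)" for j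
    by (simp add: f_def flip: complex_norm_square)
  have s: "(\<lambda>j. complex_of_real (f j)) sums ip N t p p" using ip_sums[of t N p p] by (simp add: eq)
  then have sr: "f sums Re (ip N t p p)"
    using sums_Re by fastforce
  have "ip N t p p = of_real (Re (ip N t p p))"
    using s sr sums_of_real sums_unique2 by blast
  then show "ip N t p p = of_real (Re (ip N t p p))" .
  have fin: "finite {z. (\<Sum>i\<le>N. p i * z^i) = 0}"
    using assms by (intro polyfun_rootbound_finite) auto
  have "\<not> range zeta \<subseteq> {z. (\<Sum>i\<le>N. p i * z^i) = 0}"
    using fin zeta_inj finite_subset range_inj_infinite by blast
  then obtain j where j: "peval N p (zeta j) \<noteq> 0" by (auto simp: peval_def)
  have "0 < f j" using j W_pos[of j t] by (simp add: f_def)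
  moreover have "\<And>j. 0 \<le> f j" using W_pos by (simp add: f_def less_imp_le)
  ultimately show "0 < Re (ip N t p p)"
    using sr suminf_pos2[of f j] sums_unique sums_summable by metis
qed



definition e :: "nat \<Rightarrow> nat \<Rightarrow> complex" where "e k = (\<lambda>a. if a = k then 1 else 0)"
definition zmul :: "(nat \<Rightarrow> complex) \<Rightarrow> nat \<Rightarrow> complex" where
  "zmul p = (\<lambda>a. if a = 0 then 0 else p (a - 1))"
definition rv :: "nat \<Rightarrow> (nat \<Rightarrow> complex) \<Rightarrow> nat \<Rightarrow> complex" where
  "rv n p = (\<lambda>a. if a \<le> n then cnj (p (n - a)) else 0)"
definition vanish :: "nat \<Rightarrow> (nat \<Rightarrow> complex) \<Rightarrow> bool" where
  "vanish N p \<longleftrightarrow> (\<forall>a>N. p a = 0)"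

lemma vanish_rv: "vanish n (rv n p)" by (simp add: vanish_def rv_def)
lemma vanish_e: "k \<le> N \<Longrightarrow> vanish N (e k)" by (simp add: vanish_def e_def)
lemma vanish_mono: "vanish N p \<Longrightarrow> N \<le> M \<Longrightarrow> vanish M p" by (simp add: vanish_def)

lemma ipe_ext: assumes "vanish N p" "N \<le> M" shows "ipe M t p k = ipe N t p k"
  unfolding ipe_def
  by (rule sum.mono_neutral_right) (use assms in \<open>auto simp: vanish_def\<close>)

lemma ip_ext: assumes "vanish N p" "vanish N q" "N \<le> M" shows "ip M t p q = ip N t p q"
proof -
  have "ip M t p q = (\<Sum>b\<le>M. cnj (q b) * ipe N t p b)"
    unfolding ip_def using ipe_ext[OF assms(1,3)] by simp
  also have "\<dots> = ip N t p q"
    unfolding ip_def by (rule sum.mono_neutral_right) (use assms in \<open>auto simp: vanish_def\<close>)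
  finally show ?thesis .
qed

lemma ip_e: "k \<le> N \<Longrightarrow> ip N t p (e k) = ipe N t p k"
proof -
  assume k: "k \<le> N"
  have "ip N t p (e k) = (\<Sum>b\<le>N. if b = k then ipe N t p b else 0)"
    unfolding ip_def by (intro sum.cong) (auto simp: e_def)
  also have "\<dots> = ipe N t p k" using k by simp
  finally show ?thesis .
qed

lemma sum_single: "finite S \<Longrightarrow> k \<in> S \<Longrightarrow> (\<And>b. b \<in> S \<Longrightarrow> b \<noteq> k \<Longrightarrow> f b = 0) \<Longrightarrow> sum f S = f k"
  by (subst sum.remove[of S k]) (auto intro: sum.neutral)

lemma zmul_0[simp]: "zmul p 0 = 0" and zmul_Suc[simp]: "zmul p (Suc a) = p a"
  by (simp_all add: zmul_def)

lemma ipe_lin: "ipe N t (\<lambda>a. p a - c * q a) k = ipe N t p k - c * ipe N t q k"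
  unfolding ipe_def by (simp add: algebra_simps sum_subtractf sum_distrib_left)

lemma ip_lin1: "ip N t (\<lambda>a. p a - c * q a) r = ip N t p r - c * ip N t q r"
  unfolding ip_def ipe_lin by (simp add: algebra_simps sum_subtractf sum_distrib_left)

lemma ipe_lin_add: "ipe N t (\<lambda>a. p a + c * q a) k = ipe N t p k + c * ipe N t q k"
  unfolding ipe_def by (simp add: algebra_simps sum.distrib sum_distrib_left)

lemma ip_lin1_add: "ip N t (\<lambda>a. p a + c * q a) r = ip N t p r + c * ip N t q r"
  unfolding ip_def ipe_lin_add by (simp add: algebra_simps sum.distrib sum_distrib_left)

lemma ip_herm: "ip N t q p = cnj (ip N t p q)"
proof -
  have "cnj (ip N t p q) = (\<Sum>b\<le>N. \<Sum>a\<le>N. q b * cnj (p a) * G b a t)"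
    unfolding ip_def ipe_def by (simp add: cnj_sum sum_distrib_left G_cnj mult_ac)
  also have "\<dots> = (\<Sum>a\<le>N. \<Sum>b\<le>N. q b * cnj (p a) * G b a t)" by (rule sum.swap)
  also have "\<dots> = ip N t q p"
    unfolding ip_def ipe_def by (simp add: sum_distrib_left mult_ac)
  finally show ?thesis by simp
qed

lemma ipe_zmul_gen: "ipe (Suc N) t (zmul p) k = (\<Sum>a\<le>N. p a * G (Suc a) k t)"
  unfolding ipe_def zmul_def by (subst sum.atMost_Suc_shift) simp

lemma ipe_zmul: "ipe (Suc N) t (zmul p) (Suc k) = ipe N t p k"
  unfolding ipe_zmul_gen by (simp add: ipe_def G_Suc)

lemma ip_zmul: "ip (Suc N) t (zmul p) (zmul q) = ip N t p q"
  unfolding ip_def by (subst sum.atMost_Suc_shift) (simp add: ipe_zmul)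

lemma sum_rev_atMost: "(\<Sum>x\<le>(n::nat). f (n - x)) = (\<Sum>x\<le>n. (f x :: complex))"
  by (rule sum.reindex_bij_witness[of _ "\<lambda>x. n - x" "\<lambda>x. n - x"]) auto

lemma inner_rev: "(\<Sum>a\<le>(n::nat). c * (cnj (p (n - a)) * G a b t)) = (\<Sum>a\<le>n. c * (cnj (p a) * G (n - a) b t))"
proof -
  have "(\<Sum>a\<le>n. c * (cnj (p a) * G (n - a) b t)) = (\<Sum>a\<le>n. c * (cnj (p (n - a)) * G (n - (n - a)) b t))"
    by (rule sum_rev_atMost[symmetric])
  also have "\<dots> = (\<Sum>a\<le>n. c * (cnj (p (n - a)) * G a b t))"
    by (intro sum.cong refl) auto
  finally show ?thesis by simp
qed

lemma outer_rev: "(\<Sum>b\<le>(n::nat). \<Sum>a\<le>n. q (n - b) * (cnj (p a) * G (n - a) b t)) =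
                  (\<Sum>b\<le>n. \<Sum>a\<le>n. q b * (cnj (p a) * G (n - a) (n - b) t))"
proof -
  have "(\<Sum>b\<le>n. \<Sum>a\<le>n. q b * (cnj (p a) * G (n - a) (n - b) t)) =
        (\<Sum>b\<le>n. \<Sum>a\<le>n. q (n - b) * (cnj (p a) * G (n - a) (n - (n - b)) t))"
    by (rule sum_rev_atMost[symmetric])
  also have "\<dots> = (\<Sum>b\<le>n. \<Sum>a\<le>n. q (n - b) * (cnj (p a) * G (n - a) b t))"
    by (intro sum.cong refl) auto
  finally show ?thesis by simp
qed

lemma ip_rv:
  shows "ip n t (rv n p) (rv n q) = ip n t q p"
proof -
  have "ip n t (rv n p) (rv n q) = (\<Sum>b\<le>n. \<Sum>a\<le>n. q (n - b) * (cnj (p (n - a)) * G a b t))"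
    unfolding ip_def ipe_def rv_def by (simp add: sum_distrib_left)
  also have "\<dots> = (\<Sum>b\<le>n. \<Sum>a\<le>n. q (n - b) * (cnj (p a) * G (n - a) b t))"
    by (rule sum.cong[OF refl]) (rule inner_rev)
  also have "\<dots> = (\<Sum>b\<le>n. \<Sum>a\<le>n. q b * (cnj (p a) * G (n - a) (n - b) t))"
    by (rule outer_rev)
  also have "\<dots> = (\<Sum>b\<le>n. \<Sum>a\<le>n. q b * (cnj (p a) * G b a t))"
    by (intro sum.cong refl) (simp add: G_rev)
  also have "\<dots> = ip n t q p"
    unfolding ip_def ipe_def by (subst sum.swap) (simp add: sum_distrib_left mult_ac)
  finally show ?thesis .
qed

lemma rv_e: "k \<le> n \<Longrightarrow> rv n (e (n - k)) = e k"
  by (auto simp: rv_def e_def fun_eq_iff)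

primrec Phi :: "nat \<Rightarrow> real \<Rightarrow> nat \<Rightarrow> complex" where
  "Phi 0 t = e 0"
| "Phi (Suc n) t = (\<lambda>a. zmul (Phi n t) a -
      (ipe (Suc n) t (zmul (Phi n t)) 0 / ipe n t (rv n (Phi n t)) 0) * rv n (Phi n t) a)"

definition beta :: "nat \<Rightarrow> real \<Rightarrow> complex" where
  "beta n t = ipe (Suc n) t (zmul (Phi n t)) 0 / ipe n t (rv n (Phi n t)) 0"

lemma Phi_Suc': "Phi (Suc n) t = (\<lambda>a. zmul (Phi n t) a - beta n t * rv n (Phi n t) a)"
  by (simp add: beta_def)

declare Phi.simps(2)[simp del]

definition kap :: "nat \<Rightarrow> real \<Rightarrow> complex" where "kap n t = ip n t (Phi n t) (Phi n t)"

lemma Phi_struct: "vanish n (Phi n t) \<and> Phi n t n = 1"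
proof (induction n)
  case 0 then show ?case by (simp add: vanish_def e_def)
next
  case (Suc n)
  then show ?case by (auto simp: Phi_Suc' vanish_def zmul_def rv_def)
qed

lemma Phi_vanish: "vanish n (Phi n t)" and Phi_top: "Phi n t n = 1"
  using Phi_struct by auto

lemma Phi_Suc_0: "Phi (Suc n) t 0 = - beta n t"
  by (simp add: Phi_Suc' zmul_def rv_def Phi_top)

lemma kap_pos: "kap n t = of_real (Re (kap n t))" "0 < Re (kap n t)"
proof -
  have "\<exists>a\<le>n. Phi n t a \<noteq> 0" using Phi_top[of n t] by (intro exI[of _ n]) auto
  from ip_pos[OF this, of t] show "kap n t = of_real (Re (kap n t))" "0 < Re (kap n t)"
    unfolding kap_def by auto
qed

lemma kap_nz: "kap n t \<noteq> 0" using kap_pos[of n t] by auto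

lemma cnj_kap: "cnj (kap n t) = kap n t"
  by (metis complex_cnj_complex_of_real kap_pos(1))

context
  fixes n :: nat and t :: real
  assumes orth: "\<And>k. k < n \<Longrightarrow> ipe n t (Phi n t) k = 0"
begin

lemma kap_top: "kap n t = ipe n t (Phi n t) n"
proof -
  have "kap n t = (\<Sum>b\<le>n. cnj (Phi n t b) * ipe n t (Phi n t) b)" by (simp add: kap_def ip_def)
  also have "\<dots> = cnj (Phi n t n) * ipe n t (Phi n t) n"
    by (rule sum_single) (auto simp: orth)
  finally show ?thesis by (simp add: Phi_top)
qed

lemma rv_ipe: "k \<le> n \<Longrightarrow> ipe n t (rv n (Phi n t)) k = cnj (ipe n t (Phi n t) (n - k))"
proof -
  assume k: "k \<le> n"
  have "ipe n t (rv n (Phi n t)) k = ip n t (rv n (Phi n t)) (rv n (e (n - k)))"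
    using k by (simp add: rv_e ip_e)
  also have "\<dots> = ip n t (e (n - k)) (Phi n t)" by (rule ip_rv)
  also have "\<dots> = cnj (ip n t (Phi n t) (e (n - k)))" by (rule ip_herm)
  finally show ?thesis by (simp add: ip_e)
qed

lemma rv_orth: "1 \<le> k \<Longrightarrow> k \<le> n \<Longrightarrow> ipe n t (rv n (Phi n t)) k = 0"
  using rv_ipe orth by simp

lemma rv_0: "ipe n t (rv n (Phi n t)) 0 = kap n t"
  using rv_ipe[of 0] by (simp add: kap_top[symmetric] cnj_kap)

lemma beta_eq: "beta n t = ipe (Suc n) t (zmul (Phi n t)) 0 / kap n t"
  by (simp add: beta_def rv_0)

lemma orth_Suc: "k < Suc n \<Longrightarrow> ipe (Suc n) t (Phi (Suc n) t) k = 0"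
proof -
  assume k: "k < Suc n"
  have ext: "ipe (Suc n) t (rv n (Phi n t)) k = ipe n t (rv n (Phi n t)) k"
    by (rule ipe_ext[OF vanish_rv]) simp
  have "ipe (Suc n) t (Phi (Suc n) t) k =
        ipe (Suc n) t (zmul (Phi n t)) k - beta n t * ipe n t (rv n (Phi n t)) k"
    by (simp add: Phi_Suc' ipe_lin ext)
  also have "\<dots> = 0"
  proof (cases k)
    case 0 then show ?thesis by (simp add: beta_eq rv_0 kap_nz)
  next
    case (Suc k') then show ?thesis using k by (simp add: ipe_zmul orth rv_orth)
  qed
  finally show ?thesis .
qed

end

lemma orth_all: "k < n \<Longrightarrow> ipe n t (Phi n t) k = 0"
proof (induction n arbitrary: k)
  case (Suc n) then show ?case using orth_Suc by blast
qed simp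

lemmas kap_top' = kap_top[OF orth_all]
lemmas rv_orth' = rv_orth[OF orth_all]
lemmas rv_0' = rv_0[OF orth_all]
lemmas beta_eq' = beta_eq[OF orth_all]

lemma kap_Suc: "kap (Suc n) t = of_real (1 - (norm (beta n t))^2) * kap n t"
proof -
  let ?P = "Phi n t" and ?Q = "Phi (Suc n) t" and ?b = "beta n t"
  have 1: "ip (Suc n) t ?Q (zmul ?P) = kap (Suc n) t"
  proof -
    have "ip (Suc n) t ?Q (zmul ?P) = (\<Sum>b\<le>Suc n. cnj (zmul ?P b) * ipe (Suc n) t ?Q b)" by (simp add: ip_def)
    also have "\<dots> = cnj (zmul ?P (Suc n)) * ipe (Suc n) t ?Q (Suc n)"
      by (rule sum_single) (auto simp: orth_all)
    finally show ?thesis by (simp add: zmul_def Phi_top kap_top')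
  qed
  have 2: "ip (Suc n) t ?Q (zmul ?P) = ip (Suc n) t (zmul ?P) (zmul ?P) - ?b * ip (Suc n) t (rv n ?P) (zmul ?P)"
    by (simp add: Phi_Suc' ip_lin1)
  have 3: "ip (Suc n) t (zmul ?P) (zmul ?P) = kap n t" by (simp add: ip_zmul kap_def)
  have 4: "ip (Suc n) t ?Q (rv n ?P) = 0"
  proof -
    have "ip (Suc n) t ?Q (rv n ?P) = (\<Sum>b\<le>Suc n. cnj (rv n ?P b) * ipe (Suc n) t ?Q b)" by (simp add: ip_def)
    also have "\<dots> = 0"
      by (rule sum.neutral) (auto simp: orth_all rv_def le_Suc_eq)
    finally show ?thesis .
  qed
  have zq: "zmul ?P = (\<lambda>a. ?Q a + ?b * rv n ?P a)" by (simp add: Phi_Suc' fun_eq_iff)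
  have 5: "ip (Suc n) t (rv n ?P) (rv n ?P) = kap n t"
    using ip_ext[OF vanish_rv vanish_rv, of n "Suc n" t ?P ?P] by (simp add: ip_rv kap_def)
  have 6: "ip (Suc n) t (zmul ?P) (rv n ?P) = ?b * kap n t"
    by (subst zq) (simp add: ip_lin1_add 4 5)
  have 7: "ip (Suc n) t (rv n ?P) (zmul ?P) = cnj ?b * kap n t"
    by (subst ip_herm) (simp add: 6 cnj_kap)
  have "kap (Suc n) t = kap n t - ?b * (cnj ?b * kap n t)"
    using 1 2 3 7 by simp
  also have "\<dots> = (1 - ?b * cnj ?b) * kap n t" by (simp add: algebra_simps)
  finally show ?thesis by (simp flip: complex_norm_square)
qed

lemma beta_norm: "norm (beta n t) < 1"
proof -
  have "Re (kap (Suc n) t) = (1 - (norm (beta n t))^2) * Re (kap n t)"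
    by (simp add: kap_Suc)
  then have "0 < (1 - (norm (beta n t))^2) * Re (kap n t)" using kap_pos(2)[of "Suc n" t] by simp
  then have "0 < 1 - (norm (beta n t))^2" using kap_pos(2)[of n t] by (simp add: zero_less_mult_iff)
  then have "(norm (beta n t))^2 < 1^2" by simp
  then show ?thesis by (rule power_less_imp_less_base) simp
qed



lemma G_differentiable: "(\<lambda>s. G a b s) differentiable (at t)"
  using G_deriv by (rule differentiableI_vector)

lemma ipe_differentiable:
  assumes "\<And>a. (\<lambda>s. p s a) differentiable (at t)"
  shows "(\<lambda>s. ipe N s (p s) k) differentiable (at t)"
  unfolding ipe_def
  by (intro differentiable_sum ballI finite_atMost differentiable_mult assms G_differentiable)

lemma Phi_differentiable: "(\<lambda>s. Phi n s a) differentiable (at t)"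
proof (induction n arbitrary: a t)
  case 0 then show ?case by simp
next
  case (Suc n)
  have zm: "(\<lambda>s. zmul (Phi n s) a) differentiable (at t)" for a t
    using Suc by (cases a) auto
  have rvd: "(\<lambda>s. rv n (Phi n s) a) differentiable (at t)" for a t
  proof -
    have "(\<lambda>s. rv n (Phi n s) a) = (if a \<le> n then (\<lambda>s. cnj (Phi n s (n - a))) else (\<lambda>s. 0))"
      by (auto simp: rv_def)
    then show ?thesis using Suc by (auto simp: differentiable_cnj_iff)
  qed
  have bd: "(\<lambda>s. beta n s) differentiable (at t)"
    unfolding beta_def
    by (intro differentiable_divide ipe_differentiable zm rvd) (simp add: rv_0' kap_nz)
  show ?case unfolding Phi_Suc' by (intro differentiable_diff differentiable_mult zm rvd bd)
qed

definition dPhi :: "nat \<Rightarrow> real \<Rightarrow> nat \<Rightarrow> complex" where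
  "dPhi n t a = vector_derivative (\<lambda>s. Phi n s a) (at t)"

lemma Phi_deriv: "((\<lambda>s. Phi n s a) has_vector_derivative dPhi n t a) (at t)"
  unfolding dPhi_def using Phi_differentiable vector_derivative_works by blast

lemma dPhi_vanish: "vanish (n - 1) (dPhi n t)"
proof -
  have "dPhi n t a = 0" if "a > n - 1" for a
  proof -
    have "a \<ge> n" using that by simp
    then have "(\<lambda>s. Phi n s a) = (\<lambda>s. if a = n then 1 else 0)"
      using Phi_vanish Phi_top by (auto simp: vanish_def fun_eq_iff)
    then show ?thesis by (simp add: dPhi_def)
  qed
  then show ?thesis by (simp add: vanish_def)
qed

lemma ipe_deriv:
  assumes "\<And>a. ((\<lambda>s. p s a) has_vector_derivative dp a) (at t)"
  shows "((\<lambda>s. ipe N s (p s) k) has_vector_derivative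
           (ipe N t dp k + ipe (Suc N) t (zmul (p t)) k + ipe N t (p t) (Suc k))) (at t)"
proof -
  have "((\<lambda>s. ipe N s (p s) k) has_vector_derivative
          (\<Sum>a\<le>N. p t a * (G (Suc a) k t + G a (Suc k) t) + dp a * G a k t)) (at t)"
    unfolding ipe_def
    by (intro has_vector_derivative_sum has_vector_derivative_mult assms G_deriv)
  moreover have "(\<Sum>a\<le>N. p t a * (G (Suc a) k t + G a (Suc k) t) + dp a * G a k t) =
     ipe N t dp k + ipe (Suc N) t (zmul (p t)) k + ipe N t (p t) (Suc k)"
    unfolding ipe_zmul_gen unfolding ipe_def by (simp add: sum.distrib algebra_simps)
  ultimately show ?thesis by simp
qed

lemma deriv_orth:
  assumes "k < m"
  shows "ipe m t (dPhi m t) k + ipe (Suc m) t (zmul (Phi m t)) k + ipe m t (Phi m t) (Suc k) = 0"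
proof -
  have "((\<lambda>s. ipe m s (Phi m s) k) has_vector_derivative
          (ipe m t (dPhi m t) k + ipe (Suc m) t (zmul (Phi m t)) k + ipe m t (Phi m t) (Suc k))) (at t)"
    by (rule ipe_deriv) (rule Phi_deriv)
  moreover have "(\<lambda>s. ipe m s (Phi m s) k) = (\<lambda>s. 0)" using orth_all assms by auto
  ultimately show ?thesis using vector_derivative_unique_at has_vector_derivative_const by metis
qed

lemma Phi_0_prev: "Phi n t 0 = - schur_prev beta n t"
  by (cases n) (auto simp: schur_prev_def e_def Phi_Suc_0)

lemma dPhi_0:
  "dPhi (Suc n) t 0 = - (of_real (1 - (norm (beta n t))^2) * (beta (Suc n) t - schur_prev beta n t))"
proof -
  let ?m = "Suc n" and ?p = "dPhi (Suc n) t" and ?P = "Phi n t"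
  have pv: "vanish n ?p" using dPhi_vanish[of "Suc n" t] by simp
  have R: "ip n t ?p (rv n ?P) = ?p 0 * kap n t"
  proof -
    have "ip n t (rv n ?P) ?p = (\<Sum>b\<le>n. cnj (?p b) * ipe n t (rv n ?P) b)" by (simp add: ip_def)
    also have "\<dots> = cnj (?p 0) * ipe n t (rv n ?P) 0"
      by (rule sum_single) (auto simp: rv_orth')
    finally have "ip n t (rv n ?P) ?p = cnj (?p 0) * kap n t" by (simp add: rv_0')
    then show ?thesis by (subst ip_herm) (simp add: cnj_kap)
  qed
  have ipeq: "ipe n t ?p b = - (if b = 0 then beta ?m t * kap ?m t else 0) - (if b = n then kap ?m t else 0)"
    if b: "b \<le> n" for b
  proof -
    have "ipe n t ?p b = ipe ?m t ?p b" by (rule ipe_ext[OF pv, symmetric]) simp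
    also have "\<dots> = - ipe (Suc ?m) t (zmul (Phi ?m t)) b - ipe ?m t (Phi ?m t) (Suc b)"
      using deriv_orth[of b ?m t] b by (simp add: algebra_simps eq_neg_iff_add_eq_0)
    also have "ipe (Suc ?m) t (zmul (Phi ?m t)) b = (if b = 0 then beta ?m t * kap ?m t else 0)"
    proof (cases b)
      case 0 then show ?thesis by (simp add: beta_eq' kap_nz)
    next
      case (Suc b') then show ?thesis using b by (simp add: ipe_zmul orth_all)
    qed
    also have "ipe ?m t (Phi ?m t) (Suc b) = (if b = n then kap ?m t else 0)"
      using b by (auto simp: kap_top' orth_all)
    finally show ?thesis .
  qed
  define A :: "nat \<Rightarrow> complex" where "A b = (if b = 0 then beta ?m t * kap ?m t else 0)" for b
  define B :: "nat \<Rightarrow> complex" where "B b = (if b = n then kap ?m t else 0)" for b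
  have "ip n t ?p (rv n ?P) = (\<Sum>b\<le>n. cnj (rv n ?P b) * (- A b - B b))"
    unfolding ip_def A_def B_def by (intro sum.cong refl) (simp add: ipeq)
  also have "\<dots> = - (\<Sum>b\<le>n. cnj (rv n ?P b) * A b) - (\<Sum>b\<le>n. cnj (rv n ?P b) * B b)"
    by (simp add: sum_subtractf sum_negf algebra_simps)
  also have "(\<Sum>b\<le>n. cnj (rv n ?P b) * A b) = cnj (rv n ?P 0) * A 0"
    by (rule sum_single) (auto simp: A_def)
  also have "(\<Sum>b\<le>n. cnj (rv n ?P b) * B b) = cnj (rv n ?P n) * B n"
    by (rule sum_single) (auto simp: B_def)
  also have "- (cnj (rv n ?P 0) * A 0) - cnj (rv n ?P n) * B n = - (beta ?m t * kap ?m t) - ?P 0 * kap ?m t"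
    by (simp add: rv_def Phi_top A_def B_def)
  finally have "?p 0 * kap n t = - (beta ?m t - schur_prev beta n t) * kap ?m t"
    using R by (simp add: Phi_0_prev algebra_simps)
  then have "?p 0 = - (beta ?m t - schur_prev beta n t) * (kap ?m t / kap n t)"
    using kap_nz[of n t] by (simp add: field_simps)
  also have "kap ?m t / kap n t = of_real (1 - (norm (beta n t))^2)"
    using kap_nz[of n t] by (simp add: kap_Suc)
  finally show ?thesis by (metis mult.commute mult_minus_left)
qed

lemma beta_deriv:
  "((\<lambda>s. beta n s) has_vector_derivative
     (of_real (1 - (norm (beta n t))^2) * (beta (Suc n) t - schur_prev beta n t))) (at t)"
proof -
  have "((\<lambda>s. - Phi (Suc n) s 0) has_vector_derivative - dPhi (Suc n) t 0) (at t)"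
    by (intro derivative_intros Phi_deriv)
  moreover have "(\<lambda>s. - Phi (Suc n) s 0) = beta n" by (simp add: Phi_Suc_0 fun_eq_iff)
  moreover have "- dPhi (Suc n) t 0 = of_real (1 - (norm (beta n t))^2) * (beta (Suc n) t - schur_prev beta n t)"
    by (simp only: dPhi_0 minus_minus)
  ultimately show ?thesis by simp
qed

lemma beta_solution: "schur_flow_solution (\<lambda>n. beta n 0) beta"
  unfolding schur_flow_solution_def using beta_norm beta_deriv by auto



definition tk :: "nat \<Rightarrow> real" where "tk k = 2^k * (4^(k+2) + real k + 4)"

lemma W_exp: "W j t = exp (- (4^(j+2)) + t * lam j)"
  unfolding W_def wt_def mult_exp_exp by (simp add: algebra_simps)

lemma four_pow: "real j + 1 \<le> 4^j"
proof -
  have "j < 2^j" by (rule less_exp)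
  also have "(2::nat)^j \<le> 4^j" by (rule power_mono) auto
  finally have "j + 1 \<le> 4^j" by simp
  then have "real (j + 1) \<le> real (4^j)" by (simp only: of_nat_le_iff)
  then show ?thesis by (simp only: of_nat_power of_nat_numeral of_nat_add of_nat_1)
qed

lemma lin_helper:
  fixes P Q T j' k' :: real
  shows "2*(P + k' + 4) \<le> T \<Longrightarrow> 0 \<le> Q \<Longrightarrow> j' \<le> k' \<Longrightarrow> Q + T \<ge> P + (P + k' + 4) + j' + 4"
  by (simp add: algebra_simps)

lemma gap_ineq:
  assumes "j \<noteq> k"
  shows "- (4^(j+2)) + tk k * lam j \<le> - (4^(k+2)) + tk k * lam k - 4 - real j"
proof -
  define C :: real where "C = 4^(k+2) + real k + 4"
  have C0: "0 \<le> C" by (simp add: C_def)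
  have tk2: "tk k / 2^k = C" by (simp add: tk_def C_def)
  have key: "4^(j+2) + tk k / 2^j \<ge> 4^(k+2) + tk k / 2^k + real j + 4"
  proof (cases "j < k")
    case True
    have "(2::real)^(Suc j) \<le> 2^k" by (rule power_increasing) (use True in auto)
    then have p: "2 * 2^j \<le> (2::real)^k" by simp
    have "tk k / 2^j = C * 2^k / 2^j" by (simp add: tk_def C_def)
    also have "\<dots> \<ge> C * (2 * 2^j) / 2^j"
      by (intro divide_right_mono mult_left_mono p C0) simp
    finally have "tk k / 2^j \<ge> 2 * C" by simp
    moreover have "(0::real) \<le> 4^(j+2)" by simp
    moreover have "real j \<le> real k" using True by simp
    ultimately show ?thesis unfolding tk2 C_def by (rule lin_helper)
  next
    case False
    then have jk: "k < j" using assms by simp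
    have "(4::real)^(k+2) \<le> 4^(j+1)" by (rule power_increasing) (use jk in auto)
    then have a: "2 * 4^(k+2) \<le> (4::real)^(j+2) / 2" by simp
    have b: "real k + real j + 8 \<le> (4::real)^(j+2) / 2"
      using four_pow[of j] jk by simp
    have "0 \<le> tk k / 2^j" by (simp add: tk_def)
    then show ?thesis using a b unfolding tk2 C_def by linarith
  qed
  have "tk k * lam j = tk k - tk k / 2^j" "tk k * lam k = tk k - tk k / 2^k"
    by (simp_all add: lam_def algebra_simps)
  then show ?thesis using key by linarith
qed

lemma W_gap: "j \<noteq> k \<Longrightarrow> W j (tk k) \<le> W k (tk k) * (exp (-4) * exp (-1) ^ j)"
proof -
  assume "j \<noteq> k"
  have "W j (tk k) \<le> exp (- (4^(k+2)) + tk k * lam k - 4 - real j)"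
    unfolding W_exp using gap_ineq[OF \<open>j \<noteq> k\<close>] by simp
  also have "\<dots> = W k (tk k) * (exp (-4) * exp (-1) ^ j)"
    by (simp add: W_exp exp_add exp_diff exp_of_nat_mult[symmetric] exp_minus field_simps)
  finally show ?thesis .
qed

lemma exp_m1: "exp (-1::real) \<le> 1/2"
proof -
  have "2 \<le> exp (1::real)" using exp_ge_add_one_self[of 1] by simp
  then show ?thesis by (simp add: exp_minus field_simps)
qed

lemma sum_bound:
  assumes f: "\<And>j. \<bar>f j\<bar> \<le> 3/2"
  shows "\<bar>(\<Sum>j. W j (tk k) * f j) - W k (tk k) * f k\<bar> \<le> (3/16) * W k (tk k)"
proof -
  let ?t = "tk k"
  define r where "r j = (if j = k then 0 else W j ?t * f j)" for j
  define c where "c = exp (-1::real)"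
  have c0: "0 \<le> c" "c \<le> 1/2" using exp_m1 by (auto simp: c_def)
  have sWf: "summable (\<lambda>j. W j ?t * f j)"
  proof (rule summable_comparison_test[OF _ summable_mult2[OF summable_W, of ?t "3/2"]])
    show "\<exists>N. \<forall>n\<ge>N. norm (W n ?t * f n) \<le> W n ?t * (3/2)"
    proof (intro exI allI impI)
      fix n :: nat
      have "norm (W n ?t * f n) = W n ?t * \<bar>f n\<bar>" using W_pos[of n ?t] by (simp add: abs_mult)
      also have "\<dots> \<le> W n ?t * (3/2)" by (rule mult_left_mono[OF f]) (simp add: less_imp_le W_pos)
      finally show "norm (W n ?t * f n) \<le> W n ?t * (3/2)" .
    qed
  qed
  define K where "K = (3/2) * W k ?t * exp (-4)"
  define g where "g j = K * c ^ j" for j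
  have K0: "0 \<le> K" using W_pos[of k ?t] by (simp add: K_def)
  have sg: "summable g" unfolding g_def using c0
    by (intro summable_mult summable_geometric) auto
  have rg: "\<bar>r j\<bar> \<le> g j" for j
  proof (cases "j = k")
    case True
    then have "r j = 0" by (simp add: r_def)
    moreover have "0 \<le> g j" unfolding g_def using c0 K0 by simp
    ultimately show ?thesis by simp
  next
    case False
    have "\<bar>r j\<bar> = W j ?t * \<bar>f j\<bar>" using W_pos[of j ?t] False by (simp add: r_def abs_mult)
    also have "\<dots> \<le> (W k ?t * (exp (-4) * c ^ j)) * (3/2)"
      using W_gap[OF False] f[of j] W_pos[of j ?t] by (intro mult_mono) (auto simp: c_def)
    finally show ?thesis by (simp add: g_def K_def mult_ac)
  qed
  have sr: "summable (\<lambda>j. \<bar>r j\<bar>)"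
    by (rule summable_comparison_test[OF _ sg]) (use rg in auto)
  have "(\<lambda>j. W j ?t * f j) = (\<lambda>j. (if j = k then W k ?t * f k else 0) + r j)"
    by (auto simp: r_def fun_eq_iff)
  then have "(\<Sum>j. W j ?t * f j) = (\<Sum>j. (if j = k then W k ?t * f k else 0)) + (\<Sum>j. r j)"
    using summable_rabs_cancel[OF sr] by (simp add: suminf_add[symmetric])
  also have "(\<Sum>j. (if j = k then W k ?t * f k else 0)) = W k ?t * f k"
    by (rule sums_unique[symmetric]) (rule sums_single)
  finally have eq: "(\<Sum>j. W j ?t * f j) - W k ?t * f k = (\<Sum>j. r j)" by simp
  have "\<bar>\<Sum>j. r j\<bar> \<le> (\<Sum>j. \<bar>r j\<bar>)" by (rule summable_rabs[OF sr])
  also have "\<dots> \<le> (\<Sum>j. g j)" by (rule suminf_le[OF rg sr sg])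
  also have "(\<Sum>j. g j) = K * (1 / (1 - c))"
  proof -
    have "(\<lambda>j. c^j) sums (1 / (1 - c))" by (rule geometric_sums) (use c0 in auto)
    from sums_mult[OF this, of K] show ?thesis unfolding g_def by (simp add: sums_unique[symmetric])
  qed
  also have "\<dots> \<le> (3/2) * W k ?t * (1/16) * 2"
  proof -
    have "exp (-4::real) = c ^ 4" by (simp add: c_def exp_of_nat_mult[symmetric])
    also have "\<dots> \<le> (1/2)^4" by (rule power_mono) (use c0 in auto)
    also have "(1/2::real)^4 = 1/16" by (simp add: eval_nat_numeral)
    finally have e4: "exp (-4::real) \<le> 1/16" .
    have "1 / (1 - c) \<le> 2" using c0 by (simp add: field_simps)
    have "K \<le> (3/2) * W k ?t * (1/16)" unfolding K_def using W_pos[of k ?t] e4 by simp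
    then have "K * (1 / (1 - c)) \<le> ((3/2) * W k ?t * (1/16)) * 2"
      using K0 \<open>1 / (1 - c) \<le> 2\<close> c0 by (intro mult_mono) auto
    then show ?thesis by simp
  qed
  finally show ?thesis unfolding eq by simp
qed

lemma G00_real: "G 0 0 t = of_real (\<Sum>j. W j t)"
proof -
  have "(\<lambda>j. complex_of_real (W j t)) sums G 0 0 t" using G_sums[of t 0 0] by simp
  moreover have "(\<lambda>j. complex_of_real (W j t)) sums of_real (\<Sum>j. W j t)"
    using summable_W[of t] by (intro sums_of_real summable_sums)
  ultimately show ?thesis using sums_unique2 by blast
qed

lemma ImG10: "Im (G 1 0 t) = (\<Sum>j. W j t * Im (zeta j))"
proof -
  have "(\<lambda>j. Im (complex_of_real (W j t) * zeta j)) sums Im (G 1 0 t)"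
    using sums_Im[OF G_sums[of t 1 0]] by simp
  then show ?thesis by (simp add: sums_unique)
qed

lemma beta0: "beta 0 t = G 1 0 t / G 0 0 t"
proof -
  have "ipe 1 t (zmul (e 0)) 0 = G 1 0 t" by (simp add: ipe_def e_def)
  moreover have "ipe 0 t (rv 0 (e 0)) 0 = G 0 0 t" by (simp add: ipe_def e_def rv_def)
  ultimately show ?thesis by (simp add: beta_def)
qed

lemma Im_beta0: "Im (beta 0 t) = (\<Sum>j. W j t * Im (zeta j)) / (\<Sum>j. W j t)"
proof -
  have "Im (G 1 0 t / of_real (\<Sum>j. W j t)) = Im (G 1 0 t) / (\<Sum>j. W j t)" by (rule Im_divide_of_real)
  then show ?thesis by (simp only: beta0 G00_real ImG10)
qed

lemma sumW_pos: "0 < (\<Sum>j. W j t)"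
  by (rule suminf_pos[OF summable_W W_pos])

lemma Im_zeta: "Im (zeta j) = (-1)^j * sqrt (1 - (xs j)^2)"
  by (simp add: zeta_def)

lemma sqrt_bound: "4/5 \<le> sqrt (1 - (xs j)^2)"
proof -
  have "(xs j)^2 \<le> (1/2)^2" using xs_bounds[of j] by (intro power_mono) auto
  then have "(4/5)^2 \<le> 1 - (xs j)^2" by (simp add: power2_eq_square)
  then show ?thesis by (rule real_le_rsqrt)
qed

lemma abs_Im_zeta: "\<bar>Im (zeta j)\<bar> \<le> 1"
  using abs_Im_le_cmod[of "zeta j"] norm_zeta[of j] by simp

lemma summable_WIm: "summable (\<lambda>j. W j t * Im (zeta j))"
proof (rule summable_comparison_test[OF _ summable_W[of t]])
  show "\<exists>N. \<forall>n\<ge>N. norm (W n t * Im (zeta n)) \<le> W n t"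
  proof (intro exI allI impI)
    fix n :: nat
    have "norm (W n t * Im (zeta n)) = W n t * \<bar>Im (zeta n)\<bar>" using W_pos[of n t] by (simp add: abs_mult)
    also have "\<dots> \<le> W n t * 1" by (rule mult_left_mono[OF abs_Im_zeta]) (simp add: less_imp_le W_pos)
    finally show "norm (W n t * Im (zeta n)) \<le> W n t" by simp
  qed
qed

lemma suminf_shift_half:
  "(\<Sum>j. W j t * (Im (zeta j) + c)) = (\<Sum>j. W j t * Im (zeta j)) + c * (\<Sum>j. W j t)"
proof -
  have s2: "summable (\<lambda>j. c * W j t)" by (rule summable_mult[OF summable_W])
  have "(\<Sum>j. W j t * (Im (zeta j) + c)) = (\<Sum>j. W j t * Im (zeta j) + c * W j t)"
    by (simp add: algebra_simps)
  also have "\<dots> = (\<Sum>j. W j t * Im (zeta j)) + (\<Sum>j. c * W j t)"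
    by (rule suminf_add[OF summable_WIm s2, symmetric])
  also have "(\<Sum>j. c * W j t) = c * (\<Sum>j. W j t)" by (rule suminf_mult[OF summable_W])
  finally show ?thesis .
qed

lemma abs_Im_shift: "\<bar>c\<bar> \<le> 1/2 \<Longrightarrow> \<bar>Im (zeta j) + c\<bar> \<le> 3/2"
  using abs_triangle_ineq[of "Im (zeta j)" c] abs_Im_zeta[of j] by linarith

lemma Im_even: "even k \<Longrightarrow> 1/2 \<le> Im (beta 0 (tk k))"
proof -
  assume ev: "even k"
  let ?t = "tk k"
  let ?S = "\<Sum>j. W j ?t * (Im (zeta j) + (- 1/2))"
  have b: "\<bar>?S - W k ?t * (Im (zeta k) + (- 1/2))\<bar> \<le> (3/16) * W k ?t"
    by (rule sum_bound[of "\<lambda>j. Im (zeta j) + (- 1/2)"]) (rule abs_Im_shift, simp)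
  have z: "Im (zeta k) \<ge> 4/5" using ev sqrt_bound[of k] by (simp add: Im_zeta)
  have m: "W k ?t * (4/5 + (- 1/2)) \<le> W k ?t * (Im (zeta k) + (- 1/2))"
    by (rule mult_left_mono) (use z W_pos[of k ?t] in auto)
  have m2: "W k ?t * (4/5 + (- 1/2)) = (3/10) * W k ?t" by simp
  have "0 \<le> ?S" using b m m2 W_pos[of k ?t] unfolding abs_le_iff by linarith
  also have "?S = (\<Sum>j. W j ?t * Im (zeta j)) + (- 1/2) * (\<Sum>j. W j ?t)"
    by (rule suminf_shift_half)
  finally show ?thesis using sumW_pos[of ?t] by (simp add: Im_beta0 field_simps)
qed

lemma Im_odd: "odd k \<Longrightarrow> Im (beta 0 (tk k)) \<le> - 1/2"
proof -
  assume od: "odd k"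
  let ?t = "tk k"
  let ?S = "\<Sum>j. W j ?t * (Im (zeta j) + 1/2)"
  have b: "\<bar>?S - W k ?t * (Im (zeta k) + 1/2)\<bar> \<le> (3/16) * W k ?t"
    by (rule sum_bound[of "\<lambda>j. Im (zeta j) + 1/2"]) (rule abs_Im_shift, simp)
  have z: "Im (zeta k) \<le> - 4/5" using od sqrt_bound[of k] by (simp add: Im_zeta)
  have m: "W k ?t * (Im (zeta k) + 1/2) \<le> W k ?t * (- 4/5 + 1/2)"
    by (rule mult_left_mono) (use z W_pos[of k ?t] in auto)
  have m2: "W k ?t * (- 4/5 + 1/2) = - (3/10) * W k ?t" by simp
  have "?S \<le> 0" using b m m2 W_pos[of k ?t] unfolding abs_le_iff by linarith
  also have "?S = (\<Sum>j. W j ?t * Im (zeta j)) + (1/2) * (\<Sum>j. W j ?t)"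
    by (rule suminf_shift_half)
  finally show ?thesis using sumW_pos[of ?t] by (simp add: Im_beta0 field_simps)
qed

lemma tk_ge: "real k \<le> tk k"
proof -
  have "real k \<le> 4^(k+2) + real k + 4" by simp
  also have "\<dots> \<le> 2^k * (4^(k+2) + real k + 4)"
  proof -
    have "1 \<le> (2::real)^k" by simp
    from mult_right_mono[OF this, of "4^(k+2) + real k + 4"] show ?thesis by simp
  qed
  finally show ?thesis by (simp add: tk_def)
qed

lemma no_limit: "\<not> (\<exists>L. ((\<lambda>t. beta 0 t) \<longlongrightarrow> L) at_top)"
proof
  assume "\<exists>L. ((\<lambda>t. beta 0 t) \<longlongrightarrow> L) at_top"
  then obtain L where L: "((\<lambda>t. beta 0 t) \<longlongrightarrow> L) at_top" by blast
  have lim_sub: "((\<lambda>k. Im (beta 0 (tk (f k)))) \<longlongrightarrow> Im L) sequentially"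
    if "\<And>k. k \<le> f k" for f :: "nat \<Rightarrow> nat"
  proof -
    have "filterlim (\<lambda>k. tk (f k)) at_top sequentially"
    proof (rule filterlim_at_top_mono[OF filterlim_real_sequentially])
      have "real k \<le> tk (f k)" for k
      proof -
        have "real k \<le> real (f k)" using that[of k] by simp
        then show ?thesis using tk_ge[of "f k"] by linarith
      qed
      then show "\<forall>\<^sub>F k in sequentially. real k \<le> tk (f k)" by (intro always_eventually allI)
    qed
    from tendsto_Im[OF filterlim_compose[OF L this]] show ?thesis by simp
  qed
  have l1: "((\<lambda>k. Im (beta 0 (tk (2 * k)))) \<longlongrightarrow> Im L) sequentially" by (rule lim_sub) simp
  have l2: "((\<lambda>k. Im (beta 0 (tk (2 * k + 1)))) \<longlongrightarrow> Im L) sequentially" by (rule lim_sub) simp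
  have e1: "\<forall>k. 1/2 \<le> Im (beta 0 (tk (2 * k)))" using Im_even by simp
  have e2: "\<forall>k. Im (beta 0 (tk (2 * k + 1))) \<le> - 1/2" using Im_odd by simp
  have "1/2 \<le> Im L"
    by (rule tendsto_lowerbound[OF l1]) (use e1 in \<open>auto intro: always_eventually\<close>)
  moreover have "Im L \<le> - 1/2"
    by (rule tendsto_upperbound[OF l2]) (use e2 in \<open>auto intro: always_eventually\<close>)
  ultimately show False by simp
qed



theorem proposition1p3:
  shows "\<exists>a0 :: nat \<Rightarrow> complex. (\<forall>n. norm (a0 n) < 1) \<and>
           (\<exists>\<alpha>. schur_flow_solution a0 \<alpha>) \<and>
           (\<forall>\<alpha>. schur_flow_solution a0 \<alpha> \<longrightarrow>
                  \<not> (\<exists>L. ((\<lambda>t. \<alpha> 0 t) \<longlongrightarrow> L) at_top))"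
proof (rule exI[of _ "\<lambda>n. beta n 0"], intro conjI)
  show "\<forall>n. norm (beta n 0) < 1" using beta_norm by blast
  show "\<exists>\<alpha>. schur_flow_solution (\<lambda>n. beta n 0) \<alpha>" using beta_solution by blast
  show "\<forall>\<alpha>. schur_flow_solution (\<lambda>n. beta n 0) \<alpha> \<longrightarrow> \<not> (\<exists>L. ((\<lambda>t. \<alpha> 0 t) \<longlongrightarrow> L) at_top)"
  proof (intro allI impI notI)
  fix \<alpha> assume sol: "schur_flow_solution (\<lambda>n. beta n 0) \<alpha>"
    assume "\<exists>L. ((\<lambda>t. \<alpha> 0 t) \<longlongrightarrow> L) at_top"
    then obtain L where L: "((\<lambda>t. \<alpha> 0 t) \<longlongrightarrow> L) at_top" by blast
    have ev: "\<forall>\<^sub>F t in at_top. \<alpha> 0 t = beta 0 t"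
      using eventually_ge_at_top[of "0::real"]
      by eventually_elim (simp add: sf_unique[OF sol beta_solution])
    have "((\<lambda>t. beta 0 t) \<longlongrightarrow> L) at_top"
      using tendsto_cong[OF ev] L by simp
    then show False using no_limit by blast
  qed
qed

end
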